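(* Fix the model parameters $\tau_{DA},L_P,L_U,p_P^i,p_U^i,c_P,c_I,\xi_{\rm cov},ded,Cov_{\max},D_{\max}$ and a population size vector $\mathbf m$ as in the context, and suppose Assumption (A) holds. (i) Let $K_1,K_2\in\mathbb N$ with $K_1\le K_2$ and $\beta_{IA}\in(0,1]$. If $\mathbf x^1$ is any Nash equilibrium of the population game with parameters $(K_1,\beta_{IA})$ and $\mathbf x^2$ is any Nash equilibrium of the population game with parameters $(K_2,\beta_{IA})$, then $\sum_{d\in\mathcal D}x^1_{d,P}\le\sum_{d\in\mathcal D}x^2_{d,P}$. (ii) Let $K\in\mathbb N$ and $0<\beta^1_{IA}\le\beta^2_{IA}\le 1$. If $\mathbf x^1$ is any Nash equilibrium of the game with parameters $(K,\beta^1_{IA})$ and $\mathbf x^2$ is any Nash equilibrium of the game with parameters $(K,\beta^2_{IA})$, then $\sum_{d\in\mathcal D}x^1_{d,P}\le\sum_{d\in\mathcal D}x^2_{d,P}$.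
   Context: Population game model. Let $D_{\max}\in\mathbb N$, $\mathcal D=\{1,\dots,D_{\max}\}$ (population $d$ = nodes of degree $d$), and action set $\mathcal A=\{I,N,P\}$ (insurance, no action, protection). A population size vector is $\mathbf m=(m_d)_{d\in\mathcal D}$ with $m_d>0$ and $\sum_d m_d=1$. A social state is $\mathbf x=(x_{d,a})_{d\in\mathcal D,a\in\mathcal A}$ with $x_{d,a}\ge0$ and $\sum_{a}x_{d,a}=m_d$; $\mathcal X$ is the set of social states. Parameters: $\tau_{DA}\in(0,1]$; $0\le L_P<L_U$, $\Delta L=L_U-L_P$; $0\le p_P^i<p_U^i\le1$, $\Delta p=p_U^i-p_P^i$; $\beta_{IA}\in(0,1]$; $K\in\mathbb N$; costs $c_P,c_I\ge0$; $\xi_{\rm cov}\in(0,1]$, $ded\ge0$, $Cov_{\max}\ge0$. Define $w_d=d\,m_d/\sum_{d'}d'm_{d'}$, $d_{\rm avg}=\sum_d d\,m_d$, $g_{d,a}=x_{d,a}/m_d$, $g_{d,U}=g_{d,N}+g_{d,I}$, and $\gamma(\mathbf x)=\beta_{IA}\sum_{d}w_d(g_{d,P}p_P^i+g_{d,U}p_U^i)$, $\lambda(\mathbf x)=\beta_{IA}\sum_d w_d(d-1)(g_{d,P}p_P^i+g_{d,U}p_U^i)$, and the exposure $e(\mathbf x)=\gamma(\mathbf x)\sum_{k=1}^K\lambda(\mathbf x)^{k-1}$. Costs: $C_{d,P}(\mathbf x)=\tau_{DA}(1+d\,e(\mathbf x))L_P+c_P$, $C_{d,N}(\mathbf x)=\tau_{DA}(1+d\,e(\mathbf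 x))L_U$, $C_{d,I}(\mathbf x)=C_{d,N}(\mathbf x)+c_I-Ins(\mathbf x,d)$ where $Ins(\mathbf x,d)=\min\big(Cov_{\max},\ \xi_{\rm cov}\max(0,C_{d,N}(\mathbf x)-ded)\big)$. A social state $\mathbf x^\star$ is a Nash equilibrium if for all $d\in\mathcal D$, $a\in\mathcal A$: $x^\star_{d,a}>0$ implies $C_{d,a}(\mathbf x^\star)=\min_{a'\in\mathcal A}C_{d,a'}(\mathbf x^\star)$. Assumption (A): $L_P<(1-\xi_{\rm cov})L_U$ and $c_P>c_I+ded$. *)

theory Defs
  imports Complex_Main
begin

datatype action = aI | aN | aP

text \<open>Model parameters other than K and beta_IA (which vary in the theorem).\<close>
record model =
  Dmax :: nat
  tauDA :: real
  LP :: real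
  LU :: real
  pP :: real
  pU :: real
  cP :: real
  cI :: real
  xicov :: real
  ded :: real
  Covmax :: real

definition degrees :: "model \<Rightarrow> nat set" where
  "degrees M = {1..Dmax M}"

definition valid_model :: "model \<Rightarrow> bool" where
  "valid_model M \<longleftrightarrow> Dmax M \<ge> 1 \<and> 0 < tauDA M \<and> tauDA M \<le> 1
     \<and> 0 \<le> LP M \<and> LP M < LU M \<and> 0 \<le> pP M \<and> pP M < pU M \<and> pU M \<le> 1
     \<and> cP M \<ge> 0 \<and> cI M \<ge> 0 \<and> 0 < xicov M \<and> xicov M \<le> 1
     \<and> ded M \<ge> 0 \<and> Covmax M \<ge> 0"

definition assumption_A :: "model \<Rightarrow> bool" where
  "assumption_A M \<longleftrightarrow> LP M < (1 - xicov M) * LU M \<and> cP M > cI M + ded M"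

definition pop_vector :: "model \<Rightarrow> (nat \<Rightarrow> real) \<Rightarrow> bool" where
  "pop_vector M m \<longleftrightarrow> (\<forall>d\<in>degrees M. m d > 0) \<and> (\<Sum>d\<in>degrees M. m d) = 1"

definition social_state :: "model \<Rightarrow> (nat \<Rightarrow> real) \<Rightarrow> (nat \<Rightarrow> action \<Rightarrow> real) \<Rightarrow> bool" where
  "social_state M m x \<longleftrightarrow>
     (\<forall>d\<in>degrees M. (\<forall>a. x d a \<ge> 0) \<and> x d aI + x d aN + x d aP = m d)"

definition wdeg :: "model \<Rightarrow> (nat \<Rightarrow> real) \<Rightarrow> nat \<Rightarrow> real" where
  "wdeg M m d = real d * m d / (\<Sum>d'\<in>degrees M. real d' * m d')"

definition gfrac :: "(nat \<Rightarrow> real) \<Rightarrow> (nat \<Rightarrow> action \<Rightarrow> real) \<Rightarrow> nat \<Rightarrow> action \<Rightarrow> real" where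
  "gfrac m x d a = x d a / m d"

definition infprob :: "model \<Rightarrow> (nat \<Rightarrow> real) \<Rightarrow> (nat \<Rightarrow> action \<Rightarrow> real) \<Rightarrow> nat \<Rightarrow> real" where
  "infprob M m x d = gfrac m x d aP * pP M + (gfrac m x d aN + gfrac m x d aI) * pU M"

definition gammaE :: "model \<Rightarrow> real \<Rightarrow> (nat \<Rightarrow> real) \<Rightarrow> (nat \<Rightarrow> action \<Rightarrow> real) \<Rightarrow> real" where
  "gammaE M beta m x = beta * (\<Sum>d\<in>degrees M. wdeg M m d * infprob M m x d)"

definition lambdaE :: "model \<Rightarrow> real \<Rightarrow> (nat \<Rightarrow> real) \<Rightarrow> (nat \<Rightarrow> action \<Rightarrow> real) \<Rightarrow> real" where
  "lambdaE M beta m x = beta * (\<Sum>d\<in>degrees M. wdeg M m d * (real d - 1) * infprob M m x d)"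

definition exposure :: "model \<Rightarrow> nat \<Rightarrow> real \<Rightarrow> (nat \<Rightarrow> real) \<Rightarrow> (nat \<Rightarrow> action \<Rightarrow> real) \<Rightarrow> real" where
  "exposure M K beta m x = gammaE M beta m x * (\<Sum>k\<in>{1..K}. lambdaE M beta m x ^ (k - 1))"

definition costN :: "model \<Rightarrow> nat \<Rightarrow> real \<Rightarrow> (nat \<Rightarrow> real) \<Rightarrow> (nat \<Rightarrow> action \<Rightarrow> real) \<Rightarrow> nat \<Rightarrow> real" where
  "costN M K beta m x d = tauDA M * (1 + real d * exposure M K beta m x) * LU M"

definition insurance :: "model \<Rightarrow> nat \<Rightarrow> real \<Rightarrow> (nat \<Rightarrow> real) \<Rightarrow> (nat \<Rightarrow> action \<Rightarrow> real) \<Rightarrow> nat \<Rightarrow> real" where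
  "insurance M K beta m x d = min (Covmax M) (xicov M * max 0 (costN M K beta m x d - ded M))"

definition cost :: "model \<Rightarrow> nat \<Rightarrow> real \<Rightarrow> (nat \<Rightarrow> real) \<Rightarrow> (nat \<Rightarrow> action \<Rightarrow> real) \<Rightarrow> nat \<Rightarrow> action \<Rightarrow> real" where
  "cost M K beta m x d a = (case a of
      aP \<Rightarrow> tauDA M * (1 + real d * exposure M K beta m x) * LP M + cP M
    | aN \<Rightarrow> costN M K beta m x d
    | aI \<Rightarrow> costN M K beta m x d + cI M - insurance M K beta m x d)"

definition nash_eq :: "model \<Rightarrow> nat \<Rightarrow> real \<Rightarrow> (nat \<Rightarrow> real) \<Rightarrow> (nat \<Rightarrow> action \<Rightarrow> real) \<Rightarrow> bool" where
  "nash_eq M K beta m x \<longleftrightarrow> social_state M m x \<and>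
     (\<forall>d\<in>degrees M. \<forall>a. x d a > 0 \<longrightarrow>
        cost M K beta m x d a = Min (range (cost M K beta m x d)))"

end

theory Submission
  imports Defs
begin

definition cPs :: "model \<Rightarrow> real \<Rightarrow> real" where
  "cPs M s = tauDA M * (1 + s) * LP M + cP M"
definition cNs :: "model \<Rightarrow> real \<Rightarrow> real" where
  "cNs M s = tauDA M * (1 + s) * LU M"
definition cIs :: "model \<Rightarrow> real \<Rightarrow> real" where
  "cIs M s = cNs M s + cI M - min (Covmax M) (xicov M * max 0 (cNs M s - ded M))"

lemma cost_eq:
  "cost M K b m x d a = (case a of aP \<Rightarrow> cPs M (real d * exposure M K b m x)
     | aN \<Rightarrow> cNs M (real d * exposure M K b m x) | aI \<Rightarrow> cIs M (real d * exposure M K b m x))"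
  by (simp add: cost_def costN_def insurance_def cPs_def cNs_def cIs_def split: action.splits)

lemma key_a:
  assumes v: "valid_model M" and A: "assumption_A M" and ss: "s < s'"
    and h1: "cPs M s \<le> cNs M s" and h2: "cPs M s \<le> cIs M s"
  shows "cPs M s' < cNs M s' \<and> cPs M s' < cIs M s'"
proof -
  have t: "tauDA M > 0" and lp: "LP M < LU M" and xi: "0 < xicov M" "xicov M \<le> 1"
    and lpA: "LP M < (1 - xicov M) * LU M"
    using v A unfolding valid_model_def assumption_A_def by auto
  have pos: "tauDA M * (s' - s) > 0" using t ss by simp
  have dN: "cNs M s' - cNs M s = tauDA M * (s' - s) * LU M"
    by (simp add: cNs_def algebra_simps)
  have dP: "cPs M s' - cPs M s = tauDA M * (s' - s) * LP M"
    by (simp add: cPs_def algebra_simps)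
  have c1: "tauDA M * (s' - s) * LP M < tauDA M * (s' - s) * LU M"
    using pos lp by (simp add: mult_strict_left_mono)
  have c2: "tauDA M * (s' - s) * LP M < tauDA M * (s' - s) * ((1 - xicov M) * LU M)"
    using pos lpA by (simp add: mult_strict_left_mono)
  have ins: "min (Covmax M) (xicov M * max 0 (cNs M s' - ded M))
       - min (Covmax M) (xicov M * max 0 (cNs M s - ded M))
     \<le> xicov M * (cNs M s' - cNs M s)"
  proof -
    have "cNs M s \<le> cNs M s'" using dN pos lp v unfolding valid_model_def
      by (smt (verit) mult_pos_pos)
    then have "max 0 (cNs M s' - ded M) - max 0 (cNs M s - ded M) \<le> cNs M s' - cNs M s"
      "max 0 (cNs M s - ded M) \<le> max 0 (cNs M s' - ded M)" by auto
    then have "xicov M * max 0 (cNs M s' - ded M) - xicov M * max 0 (cNs M s - ded M)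
       \<le> xicov M * (cNs M s' - cNs M s)"
      "xicov M * max 0 (cNs M s - ded M) \<le> xicov M * max 0 (cNs M s' - ded M)"
      using xi by (simp_all add: right_diff_distrib[symmetric] mult_left_mono)
    then show ?thesis by linarith
  qed
  have "cIs M s' - cIs M s \<ge> tauDA M * (s' - s) * ((1 - xicov M) * LU M)"
    using ins dN unfolding cIs_def by (simp add: algebra_simps)
  then show ?thesis using dN dP c1 c2 h1 h2 by linarith
qed

lemma range_action: "range (f :: action \<Rightarrow> real) = {f aI, f aN, f aP}"
  apply auto
  subgoal for a by (cases a) auto
  done

lemma Min_le_action: "Min (range (f :: action \<Rightarrow> real)) \<le> f a"
  unfolding range_action by (cases a) auto

lemma nash_Pmin:
  assumes "nash_eq M K b m x" "d \<in> degrees M" "x d aP > 0"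
  shows "cPs M (real d * exposure M K b m x) \<le> cNs M (real d * exposure M K b m x)
       \<and> cPs M (real d * exposure M K b m x) \<le> cIs M (real d * exposure M K b m x)"
proof -
  have e: "cost M K b m x d aP = Min (range (cost M K b m x d))"
    using assms unfolding nash_eq_def by auto
  show ?thesis using e Min_le_action[of "cost M K b m x d" aN] Min_le_action[of "cost M K b m x d" aI]
    by (simp add: cost_eq)
qed

lemma nash_notP:
  assumes "nash_eq M K b m x" "d \<in> degrees M" "x d aP < m d"
  shows "\<not> (cPs M (real d * exposure M K b m x) < cNs M (real d * exposure M K b m x)
       \<and> cPs M (real d * exposure M K b m x) < cIs M (real d * exposure M K b m x))"
proof -
  have ss: "x d aI + x d aN + x d aP = m d" "x d aI \<ge> 0" "x d aN \<ge> 0"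
    using assms unfolding nash_eq_def social_state_def by auto
  then have "x d aN > 0 \<or> x d aI > 0" using assms(3) by linarith
  then show ?thesis
  proof
    assume "x d aN > 0"
    then have e: "cost M K b m x d aN = Min (range (cost M K b m x d))"
      using assms unfolding nash_eq_def by auto
    show ?thesis using e Min_le_action[of "cost M K b m x d" aP] by (simp add: cost_eq)
  next
    assume "x d aI > 0"
    then have e: "cost M K b m x d aI = Min (range (cost M K b m x d))"
      using assms unfolding nash_eq_def by auto
    show ?thesis using e Min_le_action[of "cost M K b m x d" aP] by (simp add: cost_eq)
  qed
qed


lemma basics:
  assumes v: "valid_model M" and pv: "pop_vector M m"
  shows "finite (degrees M)" "degrees M \<noteq> {}"
    "\<And>d. d \<in> degrees M \<Longrightarrow> wdeg M m d > 0"
    "\<And>d. d \<in> degrees M \<Longrightarrow> m d > 0"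
    "\<And>d. d \<in> degrees M \<Longrightarrow> real d \<ge> 1"
proof -
  show f: "finite (degrees M)" by (simp add: degrees_def)
  show ne: "degrees M \<noteq> {}" using v by (auto simp: degrees_def valid_model_def)
  show md: "\<And>d. d \<in> degrees M \<Longrightarrow> m d > 0" using pv by (auto simp: pop_vector_def)
  show d1: "\<And>d. d \<in> degrees M \<Longrightarrow> real d \<ge> 1" by (auto simp: degrees_def)
  have "(\<Sum>d'\<in>degrees M. real d' * m d') > 0"
    apply (rule sum_pos[OF f ne])
    using md d1 by (smt (verit) mult_pos_pos)
  then show "\<And>d. d \<in> degrees M \<Longrightarrow> wdeg M m d > 0"
    unfolding wdeg_def using md d1 by (smt (verit) divide_pos_pos mult_pos_pos)
qed

lemma infprob_eq:
  assumes "social_state M m x" "d \<in> degrees M" "m d > 0"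
  shows "infprob M m x d = pU M - x d aP / m d * (pU M - pP M)"
proof -
  have "x d aI + x d aN + x d aP = m d" using assms unfolding social_state_def by auto
  then have "x d aN + x d aI = m d - x d aP" by linarith
  then have "gfrac m x d aN + gfrac m x d aI = 1 - x d aP / m d"
    unfolding gfrac_def using assms(3) by (simp add: add_divide_distrib[symmetric] diff_divide_distrib)
  then show ?thesis unfolding infprob_def by (simp only:) (use assms(3) in \<open>simp add: gfrac_def field_simps\<close>)
qed

lemma frac_le1:
  assumes "social_state M m x" "d \<in> degrees M" "m d > 0"
  shows "x d aP / m d \<le> 1" "x d aP / m d \<ge> 0"
proof -
  have "x d aI + x d aN + x d aP = m d" "x d aI \<ge> 0" "x d aN \<ge> 0" "x d aP \<ge> 0"
    using assms unfolding social_state_def by auto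
  then show "x d aP / m d \<le> 1" "x d aP / m d \<ge> 0" using assms(3) by auto
qed

lemma infprob_nonneg:
  assumes v: "valid_model M" "social_state M m x" "d \<in> degrees M" "m d > 0"
  shows "infprob M m x d \<ge> 0"
proof -
  have "x d aP / m d * (pU M - pP M) \<le> 1 * (pU M - pP M)"
    apply (rule mult_right_mono) using frac_le1[OF assms(2-4)] v by (auto simp: valid_model_def)
  then show ?thesis using infprob_eq[OF assms(2-4)] v by (simp add: valid_model_def)
qed

lemma geo_ge1:
  assumes "1 \<le> K" "(l::real) \<ge> 0"
  shows "1 \<le> (\<Sum>k\<in>{1..K}. l ^ (k - 1))"
proof -
  have "(\<lambda>k. l ^ (k - 1)) 1 \<le> (\<Sum>k\<in>{1..K}. l ^ (k - 1))"
    by (rule member_le_sum) (use assms in auto)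
  then show ?thesis by simp
qed

lemma expo_strict:
  assumes v: "valid_model M" and pv: "pop_vector M m"
    and s1: "social_state M m x1" and s2: "social_state M m x2"
    and K: "1 \<le> K1" "K1 \<le> K2" and b: "0 < b1" "b1 \<le> b2"
    and le: "\<forall>d\<in>degrees M. x2 d aP \<le> x1 d aP"
    and d1: "d1 \<in> degrees M" "x2 d1 aP < x1 d1 aP"
  shows "exposure M K1 b1 m x1 < exposure M K2 b2 m x2"
proof -
  note B = basics[OF v pv]
  have dp: "pU M - pP M > 0" using v by (simp add: valid_model_def)
  have ip_le: "infprob M m x1 d \<le> infprob M m x2 d" if "d \<in> degrees M" for d
  proof -
    have "x2 d aP / m d \<le> x1 d aP / m d" using le that B(4)[OF that] by (simp add: divide_right_mono)
    then have "x2 d aP / m d * (pU M - pP M) \<le> x1 d aP / m d * (pU M - pP M)"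
      by (rule mult_right_mono) (use dp in auto)
    then show ?thesis using infprob_eq[OF s1 that B(4)[OF that]] infprob_eq[OF s2 that B(4)[OF that]]
      by simp
  qed
  have ip_lt: "infprob M m x1 d1 < infprob M m x2 d1"
  proof -
    have "x2 d1 aP / m d1 < x1 d1 aP / m d1" using d1 B(4)[OF d1(1)] by (simp add: divide_strict_right_mono)
    then have "x2 d1 aP / m d1 * (pU M - pP M) < x1 d1 aP / m d1 * (pU M - pP M)"
      by (rule mult_strict_right_mono) (use dp in auto)
    then show ?thesis using infprob_eq[OF s1 d1(1) B(4)[OF d1(1)]] infprob_eq[OF s2 d1(1) B(4)[OF d1(1)]]
      by simp
  qed
  define S1 where "S1 = (\<Sum>d\<in>degrees M. wdeg M m d * infprob M m x1 d)"
  define S2 where "S2 = (\<Sum>d\<in>degrees M. wdeg M m d * infprob M m x2 d)"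
  have S12: "S1 < S2" unfolding S1_def S2_def
    apply (rule sum_strict_mono_ex1[OF B(1)])
    using ip_le B(3) apply (simp add: mult_left_mono less_imp_le)
    using ip_lt B(3)[OF d1(1)] d1(1) by (intro bexI[of _ d1]) (auto intro: mult_strict_left_mono)
  have S1n: "S1 \<ge> 0" unfolding S1_def
    by (rule sum_nonneg) (use B(3) infprob_nonneg[OF v s1] B(4) in \<open>simp add: less_imp_le\<close>)
  define T1 where "T1 = (\<Sum>d\<in>degrees M. wdeg M m d * (real d - 1) * infprob M m x1 d)"
  define T2 where "T2 = (\<Sum>d\<in>degrees M. wdeg M m d * (real d - 1) * infprob M m x2 d)"
  have T12: "T1 \<le> T2" unfolding T1_def T2_def
    apply (rule sum_mono)
    apply (rule mult_left_mono)
     apply (simp add: ip_le)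
    subgoal for d using B(3)[of d] B(5)[of d] by simp
    done
  have T1n: "T1 \<ge> 0" unfolding T1_def
    apply (rule sum_nonneg)
  proof -
    fix d assume dd: "d \<in> degrees M"
    have "wdeg M m d \<ge> 0" using B(3)[OF dd] by simp
    moreover have "real d - 1 \<ge> 0" using B(5)[OF dd] by simp
    moreover have "infprob M m x1 d \<ge> 0" using infprob_nonneg[OF v s1 dd B(4)[OF dd]] .
    ultimately show "0 \<le> wdeg M m d * (real d - 1) * infprob M m x1 d" by simp
  qed
  have g: "gammaE M b1 m x1 < gammaE M b2 m x2"
  proof -
    have "b1 * S1 < b1 * S2" using S12 b by simp
    also have "\<dots> \<le> b2 * S2" using b S12 S1n by (simp add: mult_right_mono)
    finally show ?thesis unfolding gammaE_def S1_def S2_def .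
  qed
  have g2: "gammaE M b2 m x2 \<ge> 0" unfolding gammaE_def using S12 S1n b
    unfolding S2_def by simp
  have l: "lambdaE M b1 m x1 \<le> lambdaE M b2 m x2" "lambdaE M b1 m x1 \<ge> 0"
  proof -
    have "b1 * T1 \<le> b1 * T2" using T12 b by simp
    also have "\<dots> \<le> b2 * T2" using b T12 T1n by (simp add: mult_right_mono)
    finally show "lambdaE M b1 m x1 \<le> lambdaE M b2 m x2" unfolding lambdaE_def T1_def T2_def .
    show "lambdaE M b1 m x1 \<ge> 0" unfolding lambdaE_def T1_def[symmetric] using T1n b by simp
  qed
  define G1 where "G1 = (\<Sum>k\<in>{1..K1}. lambdaE M b1 m x1 ^ (k - 1))"
  define G2 where "G2 = (\<Sum>k\<in>{1..K2}. lambdaE M b2 m x2 ^ (k - 1))"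
  have G1: "G1 \<ge> 1" unfolding G1_def using geo_ge1 K l by auto
  have "G1 \<le> (\<Sum>k\<in>{1..K1}. lambdaE M b2 m x2 ^ (k - 1))" unfolding G1_def
    by (rule sum_mono) (use l in \<open>simp add: power_mono\<close>)
  also have "\<dots> \<le> G2" unfolding G2_def
    by (rule sum_mono2) (use K l in auto)
  finally have G12: "G1 \<le> G2" .
  have "gammaE M b1 m x1 * G1 < gammaE M b2 m x2 * G1" using g G1 by simp
  also have "\<dots> \<le> gammaE M b2 m x2 * G2" using g2 G12 by (simp add: mult_left_mono)
  finally show ?thesis unfolding exposure_def G1_def G2_def .
qed

lemma expo_zero:
  assumes v: "valid_model M" and pv: "pop_vector M m" and s: "social_state M m x"
    and K: "1 \<le> K" and b: "0 < b" and e: "exposure M K b m x \<le> 0" and d: "d \<in> degrees M"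
  shows "x d aP = m d"
proof -
  note B = basics[OF v pv]
  define S where "S = (\<Sum>d\<in>degrees M. wdeg M m d * infprob M m x d)"
  define T where "T = (\<Sum>d\<in>degrees M. wdeg M m d * (real d - 1) * infprob M m x d)"
  have Tn: "T \<ge> 0" unfolding T_def
    apply (rule sum_nonneg)
  proof -
    fix d assume dd: "d \<in> degrees M"
    have "wdeg M m d \<ge> 0" using B(3)[OF dd] by simp
    moreover have "real d - 1 \<ge> 0" using B(5)[OF dd] by simp
    moreover have "infprob M m x d \<ge> 0" using infprob_nonneg[OF v s dd B(4)[OF dd]] .
    ultimately show "0 \<le> wdeg M m d * (real d - 1) * infprob M m x d" by simp
  qed
  have ln: "lambdaE M b m x \<ge> 0" unfolding lambdaE_def T_def[symmetric] using Tn b by simp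
  have G: "(\<Sum>k\<in>{1..K}. lambdaE M b m x ^ (k - 1)) \<ge> 1" using geo_ge1 K ln by auto
  have terms: "\<forall>d\<in>degrees M. wdeg M m d * infprob M m x d \<ge> 0"
    using B(3) infprob_nonneg[OF v s] B(4) by (simp add: less_imp_le)
  then have Sn: "S \<ge> 0" unfolding S_def by (simp add: sum_nonneg)
  have "gammaE M b m x * (\<Sum>k\<in>{1..K}. lambdaE M b m x ^ (k - 1)) \<le> 0"
    using e unfolding exposure_def .
  moreover have g0: "gammaE M b m x \<ge> 0" unfolding gammaE_def S_def[symmetric] using Sn b by simp
  moreover have "gammaE M b m x * 1 \<le> gammaE M b m x * (\<Sum>k\<in>{1..K}. lambdaE M b m x ^ (k - 1))"
    using G g0 by (rule mult_left_mono)
  ultimately have "gammaE M b m x = 0" by linarith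
  then have "S = 0" unfolding gammaE_def S_def[symmetric] using b by simp
  then have "\<forall>d\<in>degrees M. wdeg M m d * infprob M m x d = 0"
    using sum_nonneg_eq_0_iff[OF B(1), of "\<lambda>d. wdeg M m d * infprob M m x d"] terms unfolding S_def by blast
  then have "wdeg M m d * infprob M m x d = 0" using d by simp
  then have ip0: "infprob M m x d = 0" using B(3)[OF d] by simp
  define g where "g = x d aP / m d"
  have g1: "g \<le> 1" "g \<ge> 0" unfolding g_def using frac_le1[OF s d B(4)[OF d]] by auto
  have eq: "g * (pU M - pP M) = pU M" using infprob_eq[OF s d B(4)[OF d]] ip0 unfolding g_def by simp
  have vp: "0 \<le> pP M" "pP M < pU M" using v by (auto simp: valid_model_def)
  have "g * (pU M - pP M) \<le> 1 * (pU M - pP M)" by (rule mult_right_mono) (use g1 vp in auto)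
  then have "pP M = 0" using eq vp by simp
  then have "g = 1" using eq vp by simp
  then show ?thesis unfolding g_def using B(4)[OF d] by simp
qed


lemma scale_le: assumes "\<not> (r::real) * a < r * b" "1 \<le> r" shows "b \<le> a"
proof (rule ccontr)
  assume "\<not> b \<le> a" then have "a < b" by simp
  then have "r * a < r * b" using assms(2) by (intro mult_strict_left_mono) auto
  then show False using assms(1) by simp
qed

lemma main:
  assumes v: "valid_model M" and pv: "pop_vector M m" and A: "assumption_A M"
    and K: "1 \<le> K1" "K1 \<le> K2" and b: "0 < b1" "b1 \<le> b2"
    and n1: "nash_eq M K1 b1 m x1" and n2: "nash_eq M K2 b2 m x2"
  shows "(\<Sum>d\<in>degrees M. x1 d aP) \<le> (\<Sum>d\<in>degrees M. x2 d aP)"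
proof (rule ccontr)
  assume c: "\<not> ?thesis"
  note B = basics[OF v pv]
  have s1: "social_state M m x1" and s2: "social_state M m x2"
    using n1 n2 unfolding nash_eq_def by auto
  have rng1: "0 \<le> x1 d aP" "x1 d aP \<le> m d" if "d \<in> degrees M" for d
    using s1 that unfolding social_state_def by (smt (verit))+
  have rng2: "0 \<le> x2 d aP" "x2 d aP \<le> m d" if "d \<in> degrees M" for d
    using s2 that unfolding social_state_def by (smt (verit))+
  obtain d1 where d1: "d1 \<in> degrees M" "x2 d1 aP < x1 d1 aP"
    using c sum_mono[of "degrees M" "\<lambda>d. x1 d aP" "\<lambda>d. x2 d aP"] by force
  define E1 where "E1 = exposure M K1 b1 m x1"
  define E2 where "E2 = exposure M K2 b2 m x2"
  have P1: "\<And>d. d \<in> degrees M \<Longrightarrow> x1 d aP > 0 \<Longrightarrow>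
      cPs M (real d * E1) \<le> cNs M (real d * E1) \<and> cPs M (real d * E1) \<le> cIs M (real d * E1)"
    unfolding E1_def using nash_Pmin[OF n1] by blast
  have P2: "\<And>d. d \<in> degrees M \<Longrightarrow> x2 d aP > 0 \<Longrightarrow>
      cPs M (real d * E2) \<le> cNs M (real d * E2) \<and> cPs M (real d * E2) \<le> cIs M (real d * E2)"
    unfolding E2_def using nash_Pmin[OF n2] by blast
  have Q1: "\<And>d. d \<in> degrees M \<Longrightarrow> x1 d aP < m d \<Longrightarrow>
      \<not> (cPs M (real d * E1) < cNs M (real d * E1) \<and> cPs M (real d * E1) < cIs M (real d * E1))"
    unfolding E1_def using nash_notP[OF n1] by blast
  have Q2: "\<And>d. d \<in> degrees M \<Longrightarrow> x2 d aP < m d \<Longrightarrow>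
      \<not> (cPs M (real d * E2) < cNs M (real d * E2) \<and> cPs M (real d * E2) < cIs M (real d * E2))"
    unfolding E2_def using nash_notP[OF n2] by blast
  note KA = key_a[OF v A]
  have a1: "x1 d1 aP > 0" using d1 rng2[OF d1(1)] by linarith
  have a2: "x2 d1 aP < m d1" using d1 rng1[OF d1(1)] by linarith
  have "\<not> real d1 * E1 < real d1 * E2"
    using KA P1[OF d1(1) a1] Q2[OF d1(1) a2] by blast
  then have E21: "E2 \<le> E1" using B(5)[OF d1(1)] by (rule scale_le)
  have le: "\<forall>d\<in>degrees M. x2 d aP \<le> x1 d aP"
  proof
    fix d assume d: "d \<in> degrees M"
    show "x2 d aP \<le> x1 d aP"
    proof (rule ccontr)
      assume nd: "\<not> x2 d aP \<le> x1 d aP"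
      then have b1': "x2 d aP > 0" using rng1[OF d] by linarith
      have b2': "x1 d aP < m d" using nd rng2[OF d] by linarith
      have "\<not> real d * E2 < real d * E1"
        using KA P2[OF d b1'] Q1[OF d b2'] by blast
      then have "E1 \<le> E2" using B(5)[OF d] by (rule scale_le)
      then have EE: "E1 = E2" using E21 by simp
      have x: "\<not> real d1 * E1 < real d * E1"
        using KA P1[OF d1(1) a1] Q1[OF d b2'] by blast
      have y: "\<not> real d * E1 < real d1 * E1"
        using KA P2[OF d b1'] Q2[OF d1(1) a2] EE by metis
      have "real d * E1 = real d1 * E1" using x y by linarith
      then have "E1 = 0 \<or> d = d1" by simp
      then show False
      proof
        assume "E1 = 0"
        then have "x1 d aP = m d"
          using expo_zero[OF v pv s1 K(1) b(1) _ d] unfolding E1_def by simp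
        then show False using b2' by simp
      next
        assume "d = d1" then show False using nd d1 by simp
      qed
    qed
  qed
  have "E1 < E2" unfolding E1_def E2_def
    by (rule expo_strict[OF v pv s1 s2 K b le d1])
  then show False using E21 by simp
qed

theorem theorem3:
  fixes M :: model and m :: "nat \<Rightarrow> real"
  assumes "valid_model M" and "pop_vector M m" and "assumption_A M"
  shows "(\<forall>K1 K2 beta x1 x2. 1 \<le> K1 \<longrightarrow> K1 \<le> K2 \<longrightarrow> 0 < beta \<longrightarrow> beta \<le> 1 \<longrightarrow>
            nash_eq M K1 beta m x1 \<longrightarrow> nash_eq M K2 beta m x2 \<longrightarrow>
            (\<Sum>d\<in>degrees M. x1 d aP) \<le> (\<Sum>d\<in>degrees M. x2 d aP))
       \<and> (\<forall>K beta1 beta2 x1 x2. 1 \<le> K \<longrightarrow> 0 < beta1 \<longrightarrow> beta1 \<le> beta2 \<longrightarrow> beta2 \<le> 1 \<longrightarrow>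
            nash_eq M K beta1 m x1 \<longrightarrow> nash_eq M K beta2 m x2 \<longrightarrow>
            (\<Sum>d\<in>degrees M. x1 d aP) \<le> (\<Sum>d\<in>degrees M. x2 d aP))"
  using main[OF assms] by (metis order_refl)

end
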